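(* Let $T\ge 2$ and $1\le k<\lceil T/2\rceil$; put $T_c=\lceil T/(2k-1)\rceil$ and $T_{\text{last}}=T-(2k-1)(T_c-1)$. For $j\in\{1,\dots,T_c-1\}$ let $\mathcal{P}_j$ be the set of distinct vectors among $\{\mathbf{0}_{2k-1},\mathbf{1}_{2k-1},\mathbf{e}^{2k-1}_1,\dots,\mathbf{e}^{2k-1}_{2k-1}\}\subseteq\mathbb{F}_2^{2k-1}$, and let $\mathcal{P}_{T_c}$ be the set of distinct vectors among $\{\mathbf{0}_{T_{\text{last}}},\mathbf{1}_{T_{\text{last}}},\mathbf{e}^{T_{\text{last}}}_1,\dots,\mathbf{e}^{T_{\text{last}}}_{T_{\text{last}}}\}\subseteq\mathbb{F}_2^{T_{\text{last}}}$. Let $\mathbf{P}$ be the matrix whose rows are all concatenations $(\mathbf{v}_1,\mathbf{v}_2,\dots,\mathbf{v}_{T_c})\in\mathbb{F}_2^T$ with $\mathbf{v}_j\in\mathcal{P}_j$ for each $j$ (one row per element of $\mathcal{P}_1\times\cdots\times\mathcal{P}_{T_c}$). Then $\mathbf{P}$ has $\prod_{j=1}^{T_c}|\mathcal{P}_j|$ rows, which equals $2^T$ if $k=1$, $2(2k+1)^{T_c-1}$ if $k\ne1$ and $T_{\text{last}}=1$, and $(2k+1)^{T_c-1}(T_{\text{last}}+2)$ otherwise; and every vector of $\mathbb{F}_2^T$ is the sum over $\mathbb{F}_2$ of at most $k$ rows of $\mathbf{P}$.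
   Context: $\mathbf{0}_j$ and $\mathbf{1}_j$ denote the all-zero and all-ones row vectors of length $j$, and $\mathbf{e}^j_i$ is the length-$j$ row vector with a single $1$ in position $i$. *)

theory Defs
  imports Complex_Main "HOL-Library.Z2" "HOL-Library.FuncSet"
begin

text \<open>Vectors of F_2^m are represented as functions \<open>nat \<Rightarrow> bit\<close> (coordinates
  0-indexed), vanishing at all positions \<open>\<ge> m\<close>.\<close>

definition F2vecs :: "nat \<Rightarrow> (nat \<Rightarrow> bit) set" where
  "F2vecs m = {v. \<forall>i\<ge>m. v i = 0}"

definition zero_vec :: "nat \<Rightarrow> (nat \<Rightarrow> bit)" where
  "zero_vec m = (\<lambda>i. 0)"

definition ones_vec :: "nat \<Rightarrow> (nat \<Rightarrow> bit)" where
  "ones_vec m = (\<lambda>i. if i < m then 1 else 0)"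

definition unit_vec :: "nat \<Rightarrow> nat \<Rightarrow> (nat \<Rightarrow> bit)" where
  "unit_vec m a = (\<lambda>i. if i = a \<and> a < m then 1 else 0)"

definition Pset :: "nat \<Rightarrow> (nat \<Rightarrow> bit) set" where
  "Pset m = {zero_vec m, ones_vec m} \<union> {unit_vec m a | a. a < m}"

definition Tc :: "nat \<Rightarrow> nat \<Rightarrow> nat" where
  "Tc T k = nat \<lceil>real T / real (2*k - 1)\<rceil>"

definition Tlast :: "nat \<Rightarrow> nat \<Rightarrow> nat" where
  "Tlast T k = T - (2*k - 1) * (Tc T k - 1)"

text \<open>Length of the block with (0-indexed) number \<open>j\<close>, \<open>j < Tc T k\<close>.\<close>
definition blocklen :: "nat \<Rightarrow> nat \<Rightarrow> nat \<Rightarrow> nat" where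
  "blocklen T k j = (if j < Tc T k - 1 then 2*k - 1 else Tlast T k)"

text \<open>Concatenation \<open>(v_0, ..., v_{Tc-1})\<close>: block \<open>j\<close> occupies positions
  \<open>(2k-1)j, ..., (2k-1)j + blocklen j - 1\<close>.\<close>
definition concat_blocks :: "nat \<Rightarrow> nat \<Rightarrow> (nat \<Rightarrow> nat \<Rightarrow> bit) \<Rightarrow> (nat \<Rightarrow> bit)" where
  "concat_blocks T k w = (\<lambda>i. if i < T then
       (let j = i div (2*k - 1) in w j (i - (2*k - 1) * j)) else 0)"

definition Prows :: "nat \<Rightarrow> nat \<Rightarrow> (nat \<Rightarrow> bit) set" where
  "Prows T k = concat_blocks T k ` (PiE {0..<Tc T k} (\<lambda>j. Pset (blocklen T k j)))"

end

theory Submission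
  imports Defs
 begin

lemma bit_add_self[simp]: "(x::bit) + x = 0"
  by (cases x) simp_all

lemma sum_to_set:
  fixes f :: "nat \<Rightarrow> nat \<Rightarrow> bit"
  shows "\<exists>S. S \<subseteq> f ` {..<n} \<and> finite S \<and> card S \<le> n \<and> (\<forall>i. (\<Sum>t<n. f t i) = (\<Sum>r\<in>S. r i))"
proof (induction n)
  case 0 then show ?case by (intro exI[of _ "{}"]) auto
next
  case (Suc n)
  then obtain S where S: "S \<subseteq> f ` {..<n}" "finite S" "card S \<le> n" "\<forall>i. (\<Sum>t<n. f t i) = (\<Sum>r\<in>S. r i)" by blast
  show ?case
  proof (cases "f n \<in> S")
    case True
    have "\<forall>i. (\<Sum>t<Suc n. f t i) = (\<Sum>r\<in>S - {f n}. r i)"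
    proof
      fix i
      have "(\<Sum>r\<in>S. r i) = f n i + (\<Sum>r\<in>S - {f n}. r i)"
        using True S(2) by (simp add: sum.remove)
      then have "(\<Sum>t<Suc n. f t i) = (f n i + (\<Sum>r\<in>S - {f n}. r i)) + f n i"
        using S(4) by simp
      also have "\<dots> = (\<Sum>r\<in>S - {f n}. r i)"
        by (metis add.assoc add.commute bit_add_self add.left_neutral)
      finally show "(\<Sum>t<Suc n. f t i) = (\<Sum>r\<in>S - {f n}. r i)" .
    qed
    moreover have "card (S - {f n}) \<le> Suc n" using S(3) by (simp add: card_Diff_singleton True S(2))
    ultimately show ?thesis using S by (intro exI[of _ "S - {f n}"]) auto
  next
    case False
    have "\<forall>i. (\<Sum>t<Suc n. f t i) = (\<Sum>r\<in>insert (f n) S. r i)"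
    proof
      fix i
      show "(\<Sum>t<Suc n. f t i) = (\<Sum>r\<in>insert (f n) S. r i)"
        using S(4) sum.insert[OF S(2) False, of "\<lambda>r. r i"]
        by (simp only: sum.lessThan_Suc) (metis add.commute)
    qed
    moreover have "card (insert (f n) S) \<le> Suc n" using S(2,3) False by simp
    ultimately show ?thesis using S by (intro exI[of _ "insert (f n) S"]) auto
  qed
qed

lemma Pset_F2: "u \<in> Pset m \<Longrightarrow> u \<in> F2vecs m"
  by (auto simp: Pset_def F2vecs_def zero_vec_def ones_vec_def unit_vec_def)

lemma decomp_set:
  assumes "A \<subseteq> {..<m}" "card A \<le> n"
  shows "\<exists>g. (\<forall>t<n. g t \<in> Pset m) \<and> (\<forall>i. (if i \<in> A then 1 else 0) = (\<Sum>t<n. g t i))"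
  using assms
proof (induction n arbitrary: A)
  case 0
  then have "A = {}" using finite_subset[OF 0(1)] by auto
  then show ?case by auto
next
  case (Suc n)
  have fin: "finite A" using finite_subset[OF Suc.prems(1)] by auto
  show ?case
  proof (cases "A = {}")
    case True
    show ?thesis by (intro exI[of _ "\<lambda>t. zero_vec m"]) (auto simp: True Pset_def zero_vec_def)
  next
    case False
    then obtain a where a: "a \<in> A" by auto
    have "card (A - {a}) \<le> n" using Suc.prems a fin by simp
    moreover have "A - {a} \<subseteq> {..<m}" using Suc.prems by auto
    ultimately obtain g where g: "\<forall>t<n. g t \<in> Pset m" "\<forall>i. (if i \<in> A - {a} then 1 else 0) = (\<Sum>t<n. g t i)"
      using Suc.IH by blast
    have am: "a < m" using a Suc.prems by auto
    show ?thesis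
    proof (intro exI[of _ "g(n := unit_vec m a)"] conjI allI impI)
      fix t assume "t < Suc n" then show "(g(n := unit_vec m a)) t \<in> Pset m"
        using g am by (auto simp: Pset_def less_Suc_eq)
    next
      fix i
      have "(\<Sum>t<Suc n. (g(n := unit_vec m a)) t i) = (\<Sum>t<n. g t i) + unit_vec m a i" by simp
      also have "\<dots> = (if i \<in> A then 1 else 0)" using g(2)[rule_format, of i] a am
        by (auto simp: unit_vec_def)
      finally show "(if i \<in> A then 1 else 0) = (\<Sum>t<Suc n. (g(n := unit_vec m a)) t i)" by simp
    qed
  qed
qed

lemma bit_ind: "(x::bit) = (if x = 1 then 1 else 0)" by (cases x) auto

lemma decomp_block:
  assumes "u \<in> F2vecs m" "m \<le> 2*k - 1" "1 \<le> k"
  shows "\<exists>g. (\<forall>t<k. g t \<in> Pset m) \<and> (\<forall>i. u i = (\<Sum>t<k. g t i))"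
proof -
  define A where "A = {i. u i = 1}"
  have Asub: "A \<subseteq> {..<m}" using assms(1) by (auto simp: A_def F2vecs_def not_less[symmetric])
  have uA: "\<And>i. u i = (if i \<in> A then 1 else 0)" unfolding A_def by (cases "u i") auto
  show ?thesis
  proof (cases "card A \<le> k")
    case True
    then show ?thesis using decomp_set[OF Asub True] uA by metis
  next
    case False
    define B where "B = {..<m} - A"
    have fA: "finite A" using finite_subset[OF Asub] by auto
    have "card B = m - card A" unfolding B_def using Asub fA by (simp add: card_Diff_subset)
    then have cB: "card B \<le> k - 1" using False assms by linarith
    have Bsub: "B \<subseteq> {..<m}" by (auto simp: B_def)
    obtain g where g: "\<forall>t<k-1. g t \<in> Pset m" "\<forall>i. (if i \<in> B then 1 else 0) = (\<Sum>t<k-1. g t i)"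
      using decomp_set[OF Bsub cB] by blast
    have kk: "k = Suc (k - 1)" using assms by simp
    show ?thesis
    proof (intro exI[of _ "g(k-1 := ones_vec m)"] conjI allI impI)
      fix t assume "t < k" then show "(g(k-1 := ones_vec m)) t \<in> Pset m"
        using g by (auto simp: Pset_def)
    next
      fix i
      have "(\<Sum>t<k. (g(k-1 := ones_vec m)) t i) = (\<Sum>t<Suc (k-1). (g(k-1 := ones_vec m)) t i)"
        using kk by metis
      also have "\<dots> = (\<Sum>t<k-1. g t i) + ones_vec m i" by simp
      also have "\<dots> = u i" using g(2)[rule_format, of i] uA[of i] Asub
        by (auto simp: B_def ones_vec_def)
      finally show "u i = (\<Sum>t<k. (g(k-1 := ones_vec m)) t i)" by simp
    qed
  qed
qed

lemma card_Pset1: "card (Pset 1) = 2"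
proof -
  have "Pset 1 = {zero_vec 1, ones_vec 1}"
    by (auto simp: Pset_def unit_vec_def ones_vec_def fun_eq_iff)
  moreover have "zero_vec 1 \<noteq> ones_vec 1" by (auto simp: zero_vec_def ones_vec_def fun_eq_iff)
  ultimately show ?thesis by simp
qed

lemma card_Pset2: assumes "m \<ge> 2" shows "card (Pset m) = m + 2"
proof -
  have "Pset m = insert (zero_vec m) (insert (ones_vec m) (unit_vec m ` {..<m}))"
    by (auto simp: Pset_def)
  moreover have "inj_on (unit_vec m) {..<m}"
    by (auto simp: inj_on_def unit_vec_def fun_eq_iff)
  moreover have "zero_vec m \<notin> unit_vec m ` {..<m}"
    by (auto simp: zero_vec_def unit_vec_def fun_eq_iff) (metis zero_neq_one)
  moreover have "ones_vec m \<notin> unit_vec m ` {..<m}"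
  proof
    assume "ones_vec m \<in> unit_vec m ` {..<m}"
    then obtain a where a: "a < m" "ones_vec m = unit_vec m a" by auto
    define b :: nat where "b = (if a = 0 then 1 else 0)"
    have "b < m" "b \<noteq> a" using assms a by (auto simp: b_def)
    then show False using fun_cong[OF a(2), of b] by (auto simp: ones_vec_def unit_vec_def)
  qed
  moreover have "zero_vec m \<noteq> ones_vec m" using assms
    by (auto simp: zero_vec_def ones_vec_def fun_eq_iff intro!: exI[of _ 0])
  ultimately show ?thesis by (simp add: card_image)
qed

lemma Tc_props:
  assumes "T \<ge> 1" "k \<ge> 1"
  shows "Tc T k \<ge> 1" "(2*k-1) * (Tc T k - 1) < T" "T \<le> (2*k-1) * Tc T k"
proof -
  define d where "d = 2*k - 1"
  have d: "d \<ge> 1" using assms by (simp add: d_def)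
  define c where "c = \<lceil>real T / real d\<rceil>"
  have c1: "real_of_int c - 1 < real T / real d" "real T / real d \<le> real_of_int c"
    using ceiling_correct unfolding c_def by auto
  have pos: "real T / real d > 0" using assms d by simp
  then have cpos: "c \<ge> 1" using c1 by linarith
  have Tc: "Tc T k = nat c" by (simp add: Tc_def c_def d_def)
  have rc: "real (Tc T k) = real_of_int c" using cpos Tc by simp
  show "Tc T k \<ge> 1" using cpos Tc by simp
  have "real T \<le> real d * real (Tc T k)" using c1(2) rc d by (simp add: field_simps)
  then have "T \<le> d * Tc T k" by (metis of_nat_le_iff of_nat_mult)
  then show "T \<le> (2*k-1) * Tc T k" by (simp add: d_def)
  have "real d * (real (Tc T k) - 1) < real T" using c1(1) rc d by (simp add: field_simps)
  moreover have "real (Tc T k - 1) = real (Tc T k) - 1" using cpos Tc by simp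
  ultimately have "real (d * (Tc T k - 1)) < real T" by simp
  then show "(2*k-1) * (Tc T k - 1) < T" by (simp add: d_def del: of_nat_mult)
qed

lemma Tlast_props:
  assumes "T \<ge> 1" "k \<ge> 1"
  shows "Tlast T k \<ge> 1" "Tlast T k \<le> 2*k-1"
proof -
  note tp = Tc_props[OF assms]
  define d where "d = 2*k-1"
  define c where "c = Tc T k"
  have "c = Suc (c - 1)" using tp(1) c_def by simp
  then have "d * c = d*(c-1) + d" by (metis mult_Suc_right add.commute)
  then show "Tlast T k \<le> 2*k-1" "Tlast T k \<ge> 1" using tp unfolding Tlast_def d_def[symmetric] c_def[symmetric] by auto
qed

lemma concat_at:
  assumes "T \<ge> 1" "k \<ge> 1" "j < Tc T k" "p < blocklen T k j"
  shows "concat_blocks T k w ((2*k-1)*j + p) = w j p"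
proof -
  note tp = Tc_props[OF assms(1,2)]
  define d where "d = 2*k-1"
  have d: "d \<ge> 1" using assms by (simp add: d_def)
  have tl: "Tlast T k \<le> d" using Tlast_props[OF assms(1,2)] unfolding d_def by simp
  have pd: "p < d" using assms(4) tl unfolding blocklen_def d_def by (auto split: if_splits)
  have lt: "d*j + p < T"
  proof (cases "j < Tc T k - 1")
    case True
    then have "d*j + p < d*(j+1)" using pd by simp
    also have "\<dots> \<le> d*(Tc T k - 1)" using True by (intro mult_le_mono2) simp
    finally show ?thesis using tp(2) unfolding d_def by simp
  next
    case False
    then have j: "j = Tc T k - 1" using assms(3) by simp
    then have "p < T - d*(Tc T k - 1)" using assms(4) False unfolding blocklen_def Tlast_def d_def by simp
    then show ?thesis using j by simp
  qed
  have dv: "(d*j + p) div d = j" using pd by simp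
  show ?thesis using lt dv unfolding concat_blocks_def d_def[symmetric] by (simp add: Let_def)
qed

lemma blocklen_le: "T \<ge> 1 \<Longrightarrow> k \<ge> 1 \<Longrightarrow> blocklen T k j \<le> 2*k-1"
  using Tlast_props[of T k] unfolding blocklen_def by auto

theorem mainTheorem6:
  fixes T k :: nat
  assumes "T \<ge> 2" and "1 \<le> k" and "int k < \<lceil>real T / 2\<rceil>"
  shows "card (Prows T k) = (\<Prod>j<Tc T k. card (Pset (blocklen T k j)))
     \<and> (\<Prod>j<Tc T k. card (Pset (blocklen T k j))) =
         (if k = 1 then 2 ^ T
          else if Tlast T k = 1 then 2 * (2*k + 1) ^ (Tc T k - 1)
          else (2*k + 1) ^ (Tc T k - 1) * (Tlast T k + 2))
     \<and> (\<forall>v \<in> F2vecs T. \<exists>S. S \<subseteq> Prows T k \<and> finite S \<and> card S \<le> k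
            \<and> (\<forall>i. v i = (\<Sum>r\<in>S. r i)))"
proof (intro conjI)
  have T1: "T \<ge> 1" using assms by simp
  note tp = Tc_props[OF T1 assms(2)]
  note tl = Tlast_props[OF T1 assms(2)]
  define d where "d = 2*k-1"
  have d1: "d \<ge> 1" using assms by (simp add: d_def)
  show "card (Prows T k) = (\<Prod>j<Tc T k. card (Pset (blocklen T k j)))"
  proof -
    have "inj_on (concat_blocks T k) (PiE {0..<Tc T k} (\<lambda>j. Pset (blocklen T k j)))"
    proof (rule inj_onI)
      fix w w' assume w: "w \<in> PiE {0..<Tc T k} (\<lambda>j. Pset (blocklen T k j))"
        and w': "w' \<in> PiE {0..<Tc T k} (\<lambda>j. Pset (blocklen T k j))"
        and eq: "concat_blocks T k w = concat_blocks T k w'"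
      show "w = w'"
      proof (rule PiE_ext[OF w w'])
        fix j assume j: "j \<in> {0..<Tc T k}"
        show "w j = w' j"
        proof
          fix p
          show "w j p = w' j p"
          proof (cases "p < blocklen T k j")
            case True
            then show ?thesis using concat_at[OF T1 assms(2) _ True, of w] concat_at[OF T1 assms(2) _ True, of w'] j eq
              by auto
          next
            case False
            have "w j \<in> F2vecs (blocklen T k j)" "w' j \<in> F2vecs (blocklen T k j)"
              using w w' j Pset_F2 by (auto simp: PiE_def Pi_def)
            then show ?thesis using False by (simp add: F2vecs_def)
          qed
        qed
      qed
    qed
    then show ?thesis unfolding Prows_def
      by (simp add: card_image card_PiE lessThan_atLeast0)
  qed
  show "(\<Prod>j<Tc T k. card (Pset (blocklen T k j))) =
         (if k = 1 then 2 ^ T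
          else if Tlast T k = 1 then 2 * (2*k + 1) ^ (Tc T k - 1)
          else (2*k + 1) ^ (Tc T k - 1) * (Tlast T k + 2))"
  proof -
    define c where "c = Tc T k - 1"
    have cc: "Tc T k = Suc c" using tp(1) c_def by simp
    have "(\<Prod>j<Tc T k. card (Pset (blocklen T k j))) = (\<Prod>j<c. card (Pset (blocklen T k j))) * card (Pset (blocklen T k c))"
      by (simp add: cc)
    also have "(\<Prod>j<c. card (Pset (blocklen T k j))) = (\<Prod>j<c. card (Pset d))"
      by (rule prod.cong) (auto simp: blocklen_def cc d_def)
    also have "blocklen T k c = Tlast T k" by (simp add: blocklen_def cc)
    finally have P: "(\<Prod>j<Tc T k. card (Pset (blocklen T k j))) = card (Pset d) ^ c * card (Pset (Tlast T k))"
      by simp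
    show ?thesis
    proof (cases "k = 1")
      case True
      then have "d = 1" by (simp add: d_def)
      moreover have "Tlast T k = 1" using tl True by simp
      moreover have "Tc T k = T" using True by (simp add: Tc_def)
      moreover have "(2::nat) ^ (T - 1) * 2 = 2 ^ T" using T1 by (cases T) auto
      ultimately show ?thesis using P True cc card_Pset1 by (simp add: c_def)
    next
      case False
      then have "d \<ge> 2" using assms by (simp add: d_def)
      then have cd: "card (Pset d) = 2*k+1" using card_Pset2 assms(2) by (simp add: d_def)
      show ?thesis
      proof (cases "Tlast T k = 1")
        case True then show ?thesis using P cd False card_Pset1 by (simp add: c_def)
      next
        case F2: False
        then have "Tlast T k \<ge> 2" using tl by simp
        then show ?thesis using P cd False F2 card_Pset2 by (simp add: c_def)
      qed
    qed
  qed
  show "\<forall>v \<in> F2vecs T. \<exists>S. S \<subseteq> Prows T k \<and> finite S \<and> card S \<le> k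
            \<and> (\<forall>i. v i = (\<Sum>r\<in>S. r i))"
  proof
    fix v assume v: "v \<in> F2vecs T"
    define u where "u j = (\<lambda>p. if p < blocklen T k j then v (d*j+p) else 0)" for j
    have "\<forall>j. \<exists>g. (\<forall>t<k. g t \<in> Pset (blocklen T k j)) \<and> (\<forall>i. u j i = (\<Sum>t<k. g t i))"
    proof
      fix j
      have "u j \<in> F2vecs (blocklen T k j)" by (simp add: u_def F2vecs_def)
      then show "\<exists>g. (\<forall>t<k. g t \<in> Pset (blocklen T k j)) \<and> (\<forall>i. u j i = (\<Sum>t<k. g t i))"
        using decomp_block[OF _ blocklen_le[OF T1 assms(2)] assms(2)] by blast
    qed
    then obtain G where G: "\<And>j. \<forall>t<k. G j t \<in> Pset (blocklen T k j)" "\<And>j i. u j i = (\<Sum>t<k. G j t i)"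
      by metis
    define f where "f t = concat_blocks T k (restrict (\<lambda>j. G j t) {0..<Tc T k})" for t
    have fP: "f ` {..<k} \<subseteq> Prows T k"
      unfolding Prows_def f_def using G(1) by (auto simp: PiE_def)
    have sum: "v i = (\<Sum>t<k. f t i)" for i
    proof (cases "i < T")
      case False
      then show ?thesis using v by (simp add: F2vecs_def f_def concat_blocks_def)
    next
      case True
      define j where "j = i div d"
      define p where "p = i mod d"
      have ij: "i = d*j + p" by (simp add: j_def p_def)
      have pd: "p < d" using d1 by (simp add: p_def)
      have jT: "j < Tc T k"
      proof (rule ccontr)
        assume "\<not> j < Tc T k"
        then have "d * Tc T k \<le> d*j" by simp
        moreover have "T \<le> d * Tc T k" using tp(3) by (simp add: d_def)
        ultimately show False using True ij by linarith
      qed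
      have pb: "p < blocklen T k j"
      proof (cases "j < Tc T k - 1")
        case True then show ?thesis using pd by (simp add: blocklen_def d_def)
      next
        case False
        then have "j = Tc T k - 1" using jT by simp
        then show ?thesis using False True ij by (simp add: blocklen_def Tlast_def d_def)
      qed
      have "f t i = G j t p" for t
        using concat_at[OF T1 assms(2) jT pb] jT unfolding f_def ij d_def by simp
      then have "(\<Sum>t<k. f t i) = u j p" using G(2)[of j p] by simp
      also have "\<dots> = v i" using pb by (simp add: u_def ij)
      finally show ?thesis by simp
    qed
    obtain S where S: "S \<subseteq> f ` {..<k}" "finite S" "card S \<le> k" "\<forall>i. (\<Sum>t<k. f t i) = (\<Sum>r\<in>S. r i)"
      using sum_to_set[of f k] by blast
    show "\<exists>S. S \<subseteq> Prows T k \<and> finite S \<and> card S \<le> k \<and> (\<forall>i. v i = (\<Sum>r\<in>S. r i))"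
      using S fP sum by (intro exI[of _ S]) auto
  qed
qed

end
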